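(* Let $(A,+,\circ)$ be a finite left brace such that $(A,\circ)$ is a Dedekind group (every subgroup is normal), and let $(A,\cdot)$ be its decomposable associated cycle set. Suppose $A$ has a transitive cycle base, let $g$ be an element of a transitive cycle base and let $(A,\bullet)$ be the uniconnected associated cycle set $a\bullet b:=\lambda_a(g)^{-}\circ b$. Then $(A,\bullet)$ and $(A,\cdot)$ have finite multipermutation level and $mpl(A,\cdot)=mpl(A,\bullet)$. Moreover, for every $n\in\mathbb{N}$, the underlying sets of $\mathrm{Ret}^n(A,\cdot)$ and $\mathrm{Ret}^n(A,\bullet)$ coincide (as quotients of $A$).
   Context: A left brace is a set $A$ with two operations such that $(A,+)$ is an abelian group, $(A,\circ)$ is a group, and $a\circ(b+c)=a\circ b-a+a\circ c$. $\lambda_a(b):=-a+a\circ b$; $a\mapsto\lambda_a$ is a homomorphism $(A,\circ)\to\mathrm{Aut}(A,+)$. $a^{-}$ is the inverse in $(A,\circ)$. A transitive cycle base is a single $\lambda$-orbit generating $(A,+)$. A (non-degenerate) cycle set is a set $X$ with an operation such that each $\sigma_x:y\mapsto x\cdot y$ is bijective, $(x\cdot y)\cdot(x\cdot z)=(y\cdot x)\cdot(y\cdot z)$, and $x\mapsto x\cdot x$ is bijective. $\mathrm{Ret}(X)$ is the quotient of $X$ by $x\sim y\iff\sigma_x=\sigma_y$; $\mathrm{Ret}^0(X)=X$, $\mathrm{Ret}^i(X)=\mathrm{Ret}(\mathrm{Ret}^{i-1}(X))$; $mpl(X)$ is the least $n$ with $|\mathrm{Ret}^n(X)|=1$. The decomposable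 associated cycle set is $(A,\cdot)$ with $a\cdot b:=\lambda_a^{-1}(b)$. *)

theory Defs
  imports "HOL-Algebra.Algebra"
begin

definition left_brace :: "'a monoid \<Rightarrow> 'a monoid \<Rightarrow> bool" where
  "left_brace Gadd Gcirc \<longleftrightarrow>
     comm_group Gadd \<and> group Gcirc \<and> carrier Gadd = carrier Gcirc \<and>
     (\<forall>a\<in>carrier Gadd. \<forall>b\<in>carrier Gadd. \<forall>c\<in>carrier Gadd.
        a \<otimes>\<^bsub>Gcirc\<^esub> (b \<otimes>\<^bsub>Gadd\<^esub> c)
        = (a \<otimes>\<^bsub>Gcirc\<^esub> b) \<otimes>\<^bsub>Gadd\<^esub> (inv\<^bsub>Gadd\<^esub> a) \<otimes>\<^bsub>Gadd\<^esub> (a \<otimes>\<^bsub>Gcirc\<^esub> c))"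

definition brace_lambda :: "'a monoid \<Rightarrow> 'a monoid \<Rightarrow> 'a \<Rightarrow> 'a \<Rightarrow> 'a" where
  "brace_lambda Gadd Gcirc a b = (inv\<^bsub>Gadd\<^esub> a) \<otimes>\<^bsub>Gadd\<^esub> (a \<otimes>\<^bsub>Gcirc\<^esub> b)"

definition dedekind_group :: "'a monoid \<Rightarrow> bool" where
  "dedekind_group G \<longleftrightarrow> group G \<and> (\<forall>H. subgroup H G \<longrightarrow> normal H G)"

definition transitive_cycle_base :: "'a monoid \<Rightarrow> 'a monoid \<Rightarrow> 'a set \<Rightarrow> bool" where
  "transitive_cycle_base Gadd Gcirc B \<longleftrightarrow>
     (\<exists>x\<in>carrier Gadd. B = (\<lambda>a. brace_lambda Gadd Gcirc a x) ` carrier Gadd) \<and>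
     generate Gadd B = carrier Gadd"

definition decomp_op :: "'a monoid \<Rightarrow> 'a monoid \<Rightarrow> 'a \<Rightarrow> 'a \<Rightarrow> 'a" where
  "decomp_op Gadd Gcirc a b = the_inv_into (carrier Gadd) (brace_lambda Gadd Gcirc a) b"

definition unicon_op :: "'a monoid \<Rightarrow> 'a monoid \<Rightarrow> 'a \<Rightarrow> 'a \<Rightarrow> 'a \<Rightarrow> 'a" where
  "unicon_op Gadd Gcirc g a b = (inv\<^bsub>Gcirc\<^esub> (brace_lambda Gadd Gcirc a g)) \<otimes>\<^bsub>Gcirc\<^esub> b"

text \<open>The equivalence relation on B whose classes are the elements of Ret^n(B):
  Ret^0(B) = B, and [x]_n, [y]_n are identified in Ret(Ret^n(B)) iff
  sigma_[x]_n = sigma_[y]_n on Ret^n(B), where sigma_[x]([z]) = [x z].\<close>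
primrec ret_rel :: "'a set \<Rightarrow> ('a \<Rightarrow> 'a \<Rightarrow> 'a) \<Rightarrow> nat \<Rightarrow> ('a \<times> 'a) set" where
  "ret_rel B op 0 = Id_on B"
| "ret_rel B op (Suc n) =
     {(x, y). x \<in> B \<and> y \<in> B \<and> (\<forall>z\<in>B. (op x z, op y z) \<in> ret_rel B op n)}"

definition Ret_iter :: "'a set \<Rightarrow> ('a \<Rightarrow> 'a \<Rightarrow> 'a) \<Rightarrow> nat \<Rightarrow> 'a set set" where
  "Ret_iter B op n = B // ret_rel B op n"

definition has_finite_mpl :: "'a set \<Rightarrow> ('a \<Rightarrow> 'a \<Rightarrow> 'a) \<Rightarrow> bool" where
  "has_finite_mpl B op \<longleftrightarrow> (\<exists>n. card (Ret_iter B op n) = 1)"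

definition mpl :: "'a set \<Rightarrow> ('a \<Rightarrow> 'a \<Rightarrow> 'a) \<Rightarrow> nat" where
  "mpl B op = (LEAST n. card (Ret_iter B op n) = 1)"

end

theory Submission
  imports Defs
begin


locale LB =
  fixes P C :: "'a monoid"
  assumes lb: "left_brace P C" and ded: "dedekind_group C"
begin

sublocale P: comm_group P using lb unfolding left_brace_def by blast
sublocale C: group C using lb unfolding left_brace_def by blast

lemma P_canc1[simp]: "x \<in> carrier P \<Longrightarrow> z \<in> carrier P \<Longrightarrow> x \<otimes>\<^bsub>P\<^esub> (inv\<^bsub>P\<^esub> x \<otimes>\<^bsub>P\<^esub> z) = z"
  by (simp add: P.m_assoc[symmetric])
lemma P_canc2[simp]: "x \<in> carrier P \<Longrightarrow> z \<in> carrier P \<Longrightarrow> inv\<^bsub>P\<^esub> x \<otimes>\<^bsub>P\<^esub> (x \<otimes>\<^bsub>P\<^esub> z) = z"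
  by (simp add: P.m_assoc[symmetric])

lemma carr: "carrier C = carrier P" using lb unfolding left_brace_def by simp

lemma distr: "a \<in> carrier P \<Longrightarrow> b \<in> carrier P \<Longrightarrow> c \<in> carrier P \<Longrightarrow>
  a \<otimes>\<^bsub>C\<^esub> (b \<otimes>\<^bsub>P\<^esub> c)
        = (a \<otimes>\<^bsub>C\<^esub> b) \<otimes>\<^bsub>P\<^esub> (inv\<^bsub>P\<^esub> a) \<otimes>\<^bsub>P\<^esub> (a \<otimes>\<^bsub>C\<^esub> c)"
  using lb unfolding left_brace_def by blast

lemma C_canc1[simp]: "x \<in> carrier P \<Longrightarrow> z \<in> carrier P \<Longrightarrow> x \<otimes>\<^bsub>C\<^esub> (inv\<^bsub>C\<^esub> x \<otimes>\<^bsub>C\<^esub> z) = z"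
  by (metis C.inv_closed C.m_assoc C.r_inv C.l_one carr)
lemma C_canc2[simp]: "x \<in> carrier P \<Longrightarrow> z \<in> carrier P \<Longrightarrow> inv\<^bsub>C\<^esub> x \<otimes>\<^bsub>C\<^esub> (x \<otimes>\<^bsub>C\<^esub> z) = z"
  by (metis C.inv_closed C.m_assoc C.l_inv C.l_one carr)

lemma cc[simp]: "a \<in> carrier P \<Longrightarrow> b \<in> carrier P \<Longrightarrow> a \<otimes>\<^bsub>C\<^esub> b \<in> carrier P"
  using carr C.m_closed by metis
lemma ic[simp]: "a \<in> carrier P \<Longrightarrow> inv\<^bsub>C\<^esub> a \<in> carrier P"
  using carr C.inv_closed by metis

lemma r_one_P: "a \<in> carrier P \<Longrightarrow> a \<otimes>\<^bsub>C\<^esub> \<one>\<^bsub>P\<^esub> = a"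
proof -
  assume a: "a \<in> carrier P"
  have "a \<otimes>\<^bsub>C\<^esub> \<one>\<^bsub>P\<^esub> = (a \<otimes>\<^bsub>C\<^esub> \<one>\<^bsub>P\<^esub>) \<otimes>\<^bsub>P\<^esub> (inv\<^bsub>P\<^esub> a) \<otimes>\<^bsub>P\<^esub> (a \<otimes>\<^bsub>C\<^esub> \<one>\<^bsub>P\<^esub>)"
    using distr[OF a, of "\<one>\<^bsub>P\<^esub>" "\<one>\<^bsub>P\<^esub>"] by simp
  hence "(a \<otimes>\<^bsub>C\<^esub> \<one>\<^bsub>P\<^esub>) \<otimes>\<^bsub>P\<^esub> (inv\<^bsub>P\<^esub> a) = \<one>\<^bsub>P\<^esub>"
    using a by (metis P.inv_closed P.m_closed P.one_closed P.r_cancel_one' cc)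
  thus ?thesis using a by (metis P.inv_closed P.inv_equality P.inv_inv P.one_closed P.r_inv cc P.m_comm)
qed

lemma one_eq[simp]: "\<one>\<^bsub>C\<^esub> = \<one>\<^bsub>P\<^esub>"
  using r_one_P[of "\<one>\<^bsub>C\<^esub>"] carr C.one_closed C.l_one P.one_closed by metis

abbreviation lam where "lam \<equiv> brace_lambda P C"

lemma lam_closed[simp]: "a \<in> carrier P \<Longrightarrow> b \<in> carrier P \<Longrightarrow> lam a b \<in> carrier P"
  unfolding brace_lambda_def by simp

lemma circ_eq: "a \<in> carrier P \<Longrightarrow> b \<in> carrier P \<Longrightarrow> a \<otimes>\<^bsub>C\<^esub> b = a \<otimes>\<^bsub>P\<^esub> lam a b"
  unfolding brace_lambda_def by (simp add: P.m_assoc[symmetric])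

lemma lam_add: "a \<in> carrier P \<Longrightarrow> b \<in> carrier P \<Longrightarrow> c \<in> carrier P \<Longrightarrow>
   lam a (b \<otimes>\<^bsub>P\<^esub> c) = lam a b \<otimes>\<^bsub>P\<^esub> lam a c"
  unfolding brace_lambda_def using distr by (simp add: P.m_ac)

lemma lam_comp: "a \<in> carrier P \<Longrightarrow> b \<in> carrier P \<Longrightarrow> c \<in> carrier P \<Longrightarrow>
   lam (a \<otimes>\<^bsub>C\<^esub> b) c = lam a (lam b c)"
proof -
  assume a: "a \<in> carrier P" and b: "b \<in> carrier P" and c: "c \<in> carrier P"
  have "a \<otimes>\<^bsub>C\<^esub> b \<otimes>\<^bsub>C\<^esub> c = a \<otimes>\<^bsub>C\<^esub> (b \<otimes>\<^bsub>P\<^esub> lam b c)"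
    using a b c circ_eq C.m_assoc carr by metis
  also have "\<dots> = (a \<otimes>\<^bsub>C\<^esub> b) \<otimes>\<^bsub>P\<^esub> (inv\<^bsub>P\<^esub> a) \<otimes>\<^bsub>P\<^esub> (a \<otimes>\<^bsub>C\<^esub> lam b c)"
    using distr a b c by simp
  finally have e: "a \<otimes>\<^bsub>C\<^esub> b \<otimes>\<^bsub>C\<^esub> c = (a \<otimes>\<^bsub>C\<^esub> b) \<otimes>\<^bsub>P\<^esub> (inv\<^bsub>P\<^esub> a \<otimes>\<^bsub>P\<^esub> (a \<otimes>\<^bsub>C\<^esub> lam b c))"
    using a b c by (simp add: P.m_assoc)
  show ?thesis unfolding brace_lambda_def e using a b c
    by (simp add: P.m_assoc[symmetric])
qed

lemma lam_one[simp]: "c \<in> carrier P \<Longrightarrow> lam \<one>\<^bsub>P\<^esub> c = c"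
  unfolding brace_lambda_def using one_eq C.l_one carr by (metis P.inv_one P.l_one)

lemma lam_zero[simp]: "a \<in> carrier P \<Longrightarrow> lam a \<one>\<^bsub>P\<^esub> = \<one>\<^bsub>P\<^esub>"
  unfolding brace_lambda_def using r_one_P by simp

lemma lam_neg: "a \<in> carrier P \<Longrightarrow> b \<in> carrier P \<Longrightarrow> lam a (inv\<^bsub>P\<^esub> b) = inv\<^bsub>P\<^esub> (lam a b)"
proof -
  assume a: "a \<in> carrier P" and b: "b \<in> carrier P"
  have "lam a (inv\<^bsub>P\<^esub> b) \<otimes>\<^bsub>P\<^esub> lam a b = \<one>\<^bsub>P\<^esub>"
    using lam_add[OF a, of "inv\<^bsub>P\<^esub> b" b] a b by simp
  thus ?thesis using a b by (metis P.inv_equality P.inv_closed lam_closed)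
qed

lemma lam_cancel1[simp]: "a \<in> carrier P \<Longrightarrow> b \<in> carrier P \<Longrightarrow> lam (inv\<^bsub>C\<^esub> a) (lam a b) = b"
  using lam_comp[of "inv\<^bsub>C\<^esub> a" a b] carr C.l_inv by simp
lemma lam_cancel2[simp]: "a \<in> carrier P \<Longrightarrow> b \<in> carrier P \<Longrightarrow> lam a (lam (inv\<^bsub>C\<^esub> a) b) = b"
  using lam_comp[of a "inv\<^bsub>C\<^esub> a" b] carr C.r_inv by simp

lemma decomp_eq: "a \<in> carrier P \<Longrightarrow> b \<in> carrier P \<Longrightarrow> decomp_op P C a b = lam (inv\<^bsub>C\<^esub> a) b"
proof -
  assume a: "a \<in> carrier P" and b: "b \<in> carrier P"
  have inj: "inj_on (lam a) (carrier P)"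
    by (metis a inj_onI lam_cancel1)
  show ?thesis unfolding decomp_op_def
    using the_inv_into_f_f[OF inj, of "lam (inv\<^bsub>C\<^esub> a) b"] a b by simp
qed

end

context LB begin

lemma conjC: "subgroup H C \<Longrightarrow> x \<in> carrier P \<Longrightarrow> h \<in> H \<Longrightarrow> inv\<^bsub>C\<^esub> x \<otimes>\<^bsub>C\<^esub> h \<otimes>\<^bsub>C\<^esub> x \<in> H"
  using ded unfolding dedekind_group_def using normal.inv_op_closed1 carr by metis
lemma conjC2: "subgroup H C \<Longrightarrow> x \<in> carrier P \<Longrightarrow> h \<in> H \<Longrightarrow> x \<otimes>\<^bsub>C\<^esub> h \<otimes>\<^bsub>C\<^esub> inv\<^bsub>C\<^esub> x \<in> H"
  using ded unfolding dedekind_group_def using normal.inv_op_closed2 carr by metis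

definition idl where "idl I \<longleftrightarrow> subgroup I P \<and> subgroup I C \<and> (\<forall>a\<in>carrier P. \<forall>x\<in>I. lam a x \<in> I)"

lemma idl_sub: "idl I \<Longrightarrow> x \<in> I \<Longrightarrow> x \<in> carrier P"
  unfolding idl_def using subgroup.mem_carrier by metis
lemma idl_add: "idl I \<Longrightarrow> x \<in> I \<Longrightarrow> y \<in> I \<Longrightarrow> x \<otimes>\<^bsub>P\<^esub> y \<in> I"
  unfolding idl_def using subgroup.m_closed by metis
lemma idl_neg: "idl I \<Longrightarrow> x \<in> I \<Longrightarrow> inv\<^bsub>P\<^esub> x \<in> I"
  unfolding idl_def using subgroup.m_inv_closed by metis
lemma idl_neg_iff: "idl I \<Longrightarrow> x \<in> carrier P \<Longrightarrow> inv\<^bsub>P\<^esub> x \<in> I \<longleftrightarrow> x \<in> I"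
  using idl_neg by (metis P.inv_inv)
lemma idl_zero: "idl I \<Longrightarrow> \<one>\<^bsub>P\<^esub> \<in> I"
  unfolding idl_def using subgroup.one_closed by metis
lemma idl_lam: "idl I \<Longrightarrow> a \<in> carrier P \<Longrightarrow> x \<in> I \<Longrightarrow> lam a x \<in> I"
  unfolding idl_def by blast
lemma idl_lam_iff: "idl I \<Longrightarrow> a \<in> carrier P \<Longrightarrow> x \<in> carrier P \<Longrightarrow> lam a x \<in> I \<longleftrightarrow> x \<in> I"
  using idl_lam by (metis ic lam_cancel1)
lemma idl_mulC: "idl I \<Longrightarrow> x \<in> I \<Longrightarrow> y \<in> I \<Longrightarrow> x \<otimes>\<^bsub>C\<^esub> y \<in> I"
  unfolding idl_def using subgroup.m_closed by metis
lemma idl_invC: "idl I \<Longrightarrow> x \<in> I \<Longrightarrow> inv\<^bsub>C\<^esub> x \<in> I"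
  unfolding idl_def using subgroup.m_inv_closed by metis

lemma lam_self: "a \<in> carrier P \<Longrightarrow> b \<in> carrier P \<Longrightarrow> lam a (inv\<^bsub>C\<^esub> a \<otimes>\<^bsub>C\<^esub> b) = inv\<^bsub>P\<^esub> a \<otimes>\<^bsub>P\<^esub> b"
  unfolding brace_lambda_def using carr by (metis C.inv_closed C.m_assoc C.r_inv C.l_one)

lemma rel_circ: "idl I \<Longrightarrow> a \<in> carrier P \<Longrightarrow> b \<in> carrier P \<Longrightarrow>
   (inv\<^bsub>P\<^esub> a \<otimes>\<^bsub>P\<^esub> b \<in> I) \<longleftrightarrow> (inv\<^bsub>C\<^esub> a \<otimes>\<^bsub>C\<^esub> b \<in> I)"
  using idl_lam_iff[of I a "inv\<^bsub>C\<^esub> a \<otimes>\<^bsub>C\<^esub> b"] lam_self by simp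

definition succ where "succ I = {c\<in>carrier P. \<forall>u\<in>carrier P. inv\<^bsub>P\<^esub> u \<otimes>\<^bsub>P\<^esub> lam c u \<in> I}"

lemma succ_sub: "succ I \<subseteq> carrier P" unfolding succ_def by blast

lemma I_succ: assumes I: "idl I" shows "I \<subseteq> succ I"
proof
  fix c assume c: "c \<in> I"
  have cA: "c \<in> carrier P" using idl_sub[OF I c] .
  have "inv\<^bsub>P\<^esub> u \<otimes>\<^bsub>P\<^esub> lam c u \<in> I" if u: "u \<in> carrier P" for u
  proof -
    define j where "j = inv\<^bsub>C\<^esub> u \<otimes>\<^bsub>C\<^esub> c \<otimes>\<^bsub>C\<^esub> u"
    have jI: "j \<in> I" unfolding j_def using conjC I c u unfolding idl_def by blast
    have jA: "j \<in> carrier P" using idl_sub[OF I jI] .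
    have "c \<otimes>\<^bsub>C\<^esub> u = u \<otimes>\<^bsub>C\<^esub> j" unfolding j_def using u cA carr
      by (metis C.inv_closed C.m_assoc C.m_closed C.r_inv C.l_one)
    also have "\<dots> = u \<otimes>\<^bsub>P\<^esub> lam u j" using circ_eq u jA by simp
    finally have e: "lam c u = inv\<^bsub>P\<^esub> c \<otimes>\<^bsub>P\<^esub> (u \<otimes>\<^bsub>P\<^esub> lam u j)"
      unfolding brace_lambda_def by simp
    have "inv\<^bsub>P\<^esub> u \<otimes>\<^bsub>P\<^esub> lam c u = inv\<^bsub>P\<^esub> c \<otimes>\<^bsub>P\<^esub> lam u j"
    proof -
      have "inv\<^bsub>P\<^esub> u \<otimes>\<^bsub>P\<^esub> (inv\<^bsub>P\<^esub> c \<otimes>\<^bsub>P\<^esub> (u \<otimes>\<^bsub>P\<^esub> lam u j))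
         = inv\<^bsub>P\<^esub> c \<otimes>\<^bsub>P\<^esub> (inv\<^bsub>P\<^esub> u \<otimes>\<^bsub>P\<^esub> (u \<otimes>\<^bsub>P\<^esub> lam u j))"
        by (rule P.m_lcomm) (use u cA jA in simp_all)
      also have "\<dots> = inv\<^bsub>P\<^esub> c \<otimes>\<^bsub>P\<^esub> lam u j"
        using u jA by (simp add: P.m_assoc[symmetric])
      finally show ?thesis unfolding e .
    qed
    thus ?thesis using idl_add[OF I idl_neg[OF I c] idl_lam[OF I u jI]] by simp
  qed
  thus "c \<in> succ I" unfolding succ_def using cA by blast
qed

lemma succ_subgroupC: assumes I: "idl I" shows "subgroup (succ I) C"
proof (rule C.subgroupI)
  show "succ I \<subseteq> carrier C" using succ_sub carr by simp
  show "succ I \<noteq> {}" using I_succ[OF I] idl_zero[OF I] by blast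
next
  fix c assume c: "c \<in> succ I"
  hence cA: "c \<in> carrier P" and h: "\<And>u. u \<in> carrier P \<Longrightarrow> inv\<^bsub>P\<^esub> u \<otimes>\<^bsub>P\<^esub> lam c u \<in> I"
    unfolding succ_def by auto
  have "inv\<^bsub>P\<^esub> u \<otimes>\<^bsub>P\<^esub> lam (inv\<^bsub>C\<^esub> c) u \<in> I" if u: "u \<in> carrier P" for u
  proof -
    define v where "v = lam (inv\<^bsub>C\<^esub> c) u"
    have vA: "v \<in> carrier P" unfolding v_def using u cA by simp
    have lv: "lam c v = u" unfolding v_def using u cA by simp
    have "inv\<^bsub>P\<^esub> u \<otimes>\<^bsub>P\<^esub> v = inv\<^bsub>P\<^esub> (inv\<^bsub>P\<^esub> v \<otimes>\<^bsub>P\<^esub> lam c v)"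
      using lv vA u by (simp add: P.inv_mult P.m_comm)
    thus ?thesis using idl_neg[OF I h[OF vA]] v_def by simp
  qed
  thus "inv\<^bsub>C\<^esub> c \<in> succ I" unfolding succ_def using cA by simp
next
  fix c d assume c: "c \<in> succ I" and d: "d \<in> succ I"
  hence cA: "c \<in> carrier P" and hc: "\<And>u. u \<in> carrier P \<Longrightarrow> inv\<^bsub>P\<^esub> u \<otimes>\<^bsub>P\<^esub> lam c u \<in> I"
    and dA: "d \<in> carrier P" and hd: "\<And>u. u \<in> carrier P \<Longrightarrow> inv\<^bsub>P\<^esub> u \<otimes>\<^bsub>P\<^esub> lam d u \<in> I"
    unfolding succ_def by auto
  have "inv\<^bsub>P\<^esub> u \<otimes>\<^bsub>P\<^esub> lam (c \<otimes>\<^bsub>C\<^esub> d) u \<in> I" if u: "u \<in> carrier P" for u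
  proof -
    have du: "lam d u \<in> carrier P" using u dA by simp
    have "inv\<^bsub>P\<^esub> u \<otimes>\<^bsub>P\<^esub> lam (c \<otimes>\<^bsub>C\<^esub> d) u =
       (inv\<^bsub>P\<^esub> (lam d u) \<otimes>\<^bsub>P\<^esub> lam c (lam d u)) \<otimes>\<^bsub>P\<^esub> (inv\<^bsub>P\<^esub> u \<otimes>\<^bsub>P\<^esub> lam d u)"
    proof -
      have "(inv\<^bsub>P\<^esub> (lam d u) \<otimes>\<^bsub>P\<^esub> lam c (lam d u)) \<otimes>\<^bsub>P\<^esub> (inv\<^bsub>P\<^esub> u \<otimes>\<^bsub>P\<^esub> lam d u)
        = inv\<^bsub>P\<^esub> u \<otimes>\<^bsub>P\<^esub> lam c (lam d u) \<otimes>\<^bsub>P\<^esub> (inv\<^bsub>P\<^esub> (lam d u) \<otimes>\<^bsub>P\<^esub> lam d u)"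
        using u du cA by (simp add: P.m_ac)
      also have "\<dots> = inv\<^bsub>P\<^esub> u \<otimes>\<^bsub>P\<^esub> lam c (lam d u)" using u du cA by simp
      finally show ?thesis using lam_comp[OF cA dA u] by simp
    qed
    thus ?thesis using idl_add[OF I hc[OF du] hd[OF u]] by simp
  qed
  thus "c \<otimes>\<^bsub>C\<^esub> d \<in> succ I" unfolding succ_def using cA dA by simp
qed

end

context LB begin

lemma succ_memC: "idl I \<Longrightarrow> x \<in> succ I \<Longrightarrow> y \<in> succ I \<Longrightarrow> x \<otimes>\<^bsub>C\<^esub> y \<in> succ I"
  using succ_subgroupC subgroup.m_closed by metis
lemma succ_invC: "idl I \<Longrightarrow> x \<in> succ I \<Longrightarrow> inv\<^bsub>C\<^esub> x \<in> succ I"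
  using succ_subgroupC subgroup.m_inv_closed by metis

lemma succ_addI: assumes I: "idl I" and k: "k \<in> succ I" and i: "i \<in> I"
  shows "k \<otimes>\<^bsub>P\<^esub> i \<in> succ I"
proof -
  have kA: "k \<in> carrier P" using k succ_sub by blast
  have iA: "i \<in> carrier P" using idl_sub[OF I i] .
  have "k \<otimes>\<^bsub>P\<^esub> i = k \<otimes>\<^bsub>C\<^esub> lam (inv\<^bsub>C\<^esub> k) i"
    using circ_eq[of k "lam (inv\<^bsub>C\<^esub> k) i"] kA iA by simp
  moreover have "lam (inv\<^bsub>C\<^esub> k) i \<in> succ I"
    using I_succ[OF I] idl_lam[OF I _ i] kA by auto
  ultimately show ?thesis using succ_memC[OF I k] by simp
qed

lemma succ_lam: assumes I: "idl I" and c: "c \<in> succ I" and a: "a \<in> carrier P"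
  shows "lam a c \<in> succ I"
proof -
  have cA: "c \<in> carrier P" using c succ_sub by blast
  define k where "k = a \<otimes>\<^bsub>C\<^esub> c \<otimes>\<^bsub>C\<^esub> inv\<^bsub>C\<^esub> a"
  have k: "k \<in> succ I" unfolding k_def using conjC2[OF succ_subgroupC[OF I] a c] .
  have kA: "k \<in> carrier P" using k succ_sub by blast
  have "a \<otimes>\<^bsub>C\<^esub> c = k \<otimes>\<^bsub>C\<^esub> a" unfolding k_def using a cA carr
    by (metis C.inv_closed C.m_assoc C.m_closed C.l_inv C.r_one)
  also have "\<dots> = k \<otimes>\<^bsub>P\<^esub> lam k a" using circ_eq kA a by simp
  finally have e: "lam a c = inv\<^bsub>P\<^esub> a \<otimes>\<^bsub>P\<^esub> (k \<otimes>\<^bsub>P\<^esub> lam k a)"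
    unfolding brace_lambda_def by simp
  have i: "inv\<^bsub>P\<^esub> a \<otimes>\<^bsub>P\<^esub> lam k a \<in> I" using k a unfolding succ_def by blast
  have "lam a c = k \<otimes>\<^bsub>P\<^esub> (inv\<^bsub>P\<^esub> a \<otimes>\<^bsub>P\<^esub> lam k a)"
    unfolding e by (rule P.m_lcomm) (use a kA in simp_all)
  thus ?thesis using succ_addI[OF I k i] by simp
qed

lemma idl_succ: assumes I: "idl I" shows "idl (succ I)"
proof -
  have "subgroup (succ I) P"
  proof (rule P.subgroupI)
    show "succ I \<subseteq> carrier P" using succ_sub .
    show "succ I \<noteq> {}" using I_succ[OF I] idl_zero[OF I] by blast
  next
    fix c assume c: "c \<in> succ I"
    have cA: "c \<in> carrier P" using c succ_sub by blast
    have "\<one>\<^bsub>P\<^esub> = c \<otimes>\<^bsub>P\<^esub> lam c (inv\<^bsub>C\<^esub> c)"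
      using circ_eq[of c "inv\<^bsub>C\<^esub> c"] cA carr C.r_inv by simp
    hence "inv\<^bsub>P\<^esub> c = lam c (inv\<^bsub>C\<^esub> c)" using cA
      by (metis P.inv_equality P.m_comm ic lam_closed)
    thus "inv\<^bsub>P\<^esub> c \<in> succ I" using succ_lam[OF I succ_invC[OF I c] cA] by simp
  next
    fix c d assume c: "c \<in> succ I" and d: "d \<in> succ I"
    have cA: "c \<in> carrier P" using c succ_sub by blast
    have dA: "d \<in> carrier P" using d succ_sub by blast
    have "c \<otimes>\<^bsub>P\<^esub> d = c \<otimes>\<^bsub>C\<^esub> lam (inv\<^bsub>C\<^esub> c) d"
      using circ_eq[of c "lam (inv\<^bsub>C\<^esub> c) d"] cA dA by simp
    thus "c \<otimes>\<^bsub>P\<^esub> d \<in> succ I" using succ_memC[OF I c succ_lam[OF I d]] cA by simp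
  qed
  thus ?thesis unfolding idl_def using succ_subgroupC[OF I] succ_lam[OF I] by blast
qed

end

context LB begin

definition rel where "rel I = {(a,b). a \<in> carrier P \<and> b \<in> carrier P \<and> inv\<^bsub>P\<^esub> a \<otimes>\<^bsub>P\<^esub> b \<in> I}"

lemma idl_relC: "idl I \<Longrightarrow> (a,b) \<in> rel I \<longleftrightarrow> a \<in> carrier P \<and> b \<in> carrier P \<and> inv\<^bsub>C\<^esub> a \<otimes>\<^bsub>C\<^esub> b \<in> I"
  unfolding rel_def using rel_circ by auto

lemma dec_step: assumes I: "idl I" and h: "ret_rel (carrier P) (decomp_op P C) n = rel I"
  shows "ret_rel (carrier P) (decomp_op P C) (Suc n) = rel (succ I)"
proof (rule Set.set_eqI, rule iffI)
  fix p assume "p \<in> ret_rel (carrier P) (decomp_op P C) (Suc n)"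
  then obtain x y where p: "p = (x,y)" and x: "x \<in> carrier P" and y: "y \<in> carrier P"
    and H: "\<And>z. z \<in> carrier P \<Longrightarrow> inv\<^bsub>P\<^esub> (lam (inv\<^bsub>C\<^esub> x) z) \<otimes>\<^bsub>P\<^esub> lam (inv\<^bsub>C\<^esub> y) z \<in> I"
    using h by (auto simp: decomp_eq rel_def)
  have xy: "inv\<^bsub>C\<^esub> x \<otimes>\<^bsub>C\<^esub> y \<in> carrier P" using x y by simp
  have "inv\<^bsub>P\<^esub> u \<otimes>\<^bsub>P\<^esub> lam (inv\<^bsub>C\<^esub> x \<otimes>\<^bsub>C\<^esub> y) u \<in> I" if u: "u \<in> carrier P" for u
  proof -
    have l: "lam (inv\<^bsub>C\<^esub> x \<otimes>\<^bsub>C\<^esub> y) u = lam (inv\<^bsub>C\<^esub> x) (lam y u)"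
      using lam_comp x y u by simp
    have "inv\<^bsub>P\<^esub> (lam (inv\<^bsub>C\<^esub> x) (lam y u)) \<otimes>\<^bsub>P\<^esub> u \<in> I"
      using H[of "lam y u"] u y by simp
    hence "inv\<^bsub>P\<^esub> (inv\<^bsub>P\<^esub> (lam (inv\<^bsub>C\<^esub> x) (lam y u)) \<otimes>\<^bsub>P\<^esub> u) \<in> I" using idl_neg[OF I] by blast
    thus ?thesis unfolding l using x y u by (simp add: P.inv_mult P.m_comm)
  qed
  hence "inv\<^bsub>C\<^esub> x \<otimes>\<^bsub>C\<^esub> y \<in> succ I" unfolding succ_def using xy by blast
  thus "p \<in> rel (succ I)" unfolding p using idl_relC[OF idl_succ[OF I]] x y by simp
next
  fix p assume "p \<in> rel (succ I)"
  then obtain x y where p: "p = (x,y)" and x: "x \<in> carrier P" and y: "y \<in> carrier P"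
    and c: "inv\<^bsub>C\<^esub> x \<otimes>\<^bsub>C\<^esub> y \<in> succ I"
    using idl_relC[OF idl_succ[OF I]] by (cases p) auto
  have "inv\<^bsub>P\<^esub> (lam (inv\<^bsub>C\<^esub> x) z) \<otimes>\<^bsub>P\<^esub> lam (inv\<^bsub>C\<^esub> y) z \<in> I" if z: "z \<in> carrier P" for z
  proof -
    define u where "u = lam (inv\<^bsub>C\<^esub> y) z"
    have u: "u \<in> carrier P" unfolding u_def using y z by simp
    have l: "lam (inv\<^bsub>C\<^esub> x \<otimes>\<^bsub>C\<^esub> y) u = lam (inv\<^bsub>C\<^esub> x) z"
      using lam_comp x y u z unfolding u_def by simp
    have "inv\<^bsub>P\<^esub> u \<otimes>\<^bsub>P\<^esub> lam (inv\<^bsub>C\<^esub> x) z \<in> I" using c u l unfolding succ_def by auto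
    hence "inv\<^bsub>P\<^esub> (inv\<^bsub>P\<^esub> u \<otimes>\<^bsub>P\<^esub> lam (inv\<^bsub>C\<^esub> x) z) \<in> I" using idl_neg[OF I] by blast
    thus ?thesis unfolding u_def using x y z by (simp add: P.inv_mult P.m_comm)
  qed
  thus "p \<in> ret_rel (carrier P) (decomp_op P C) (Suc n)"
    unfolding p using h x y by (auto simp: decomp_eq rel_def)
qed

end

locale LBg = LB +
  fixes g
  assumes gA: "g \<in> carrier P"
    and gen: "carrier P \<subseteq> generate P ((\<lambda>a. brace_lambda P C a g) ` carrier P)"
begin

lemma orbit_sub: "subgroup U P \<Longrightarrow> (\<And>a. a \<in> carrier P \<Longrightarrow> lam a g \<in> U) \<Longrightarrow> carrier P \<subseteq> U"
  using gen P.generate_subgroup_incl[of "(\<lambda>a. lam a g) ` carrier P" U] by blast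

definition stab where "stab I = {c \<in> carrier P. inv\<^bsub>P\<^esub> g \<otimes>\<^bsub>P\<^esub> lam c g \<in> I}"

lemma stab_subgroup: assumes I: "idl I" shows "subgroup (stab I) C"
proof (rule C.subgroupI)
  show "stab I \<subseteq> carrier C" unfolding stab_def using carr by auto
  show "stab I \<noteq> {}" unfolding stab_def using gA idl_zero[OF I] P.one_closed
    by (metis (no_types, lifting) P.l_inv empty_iff lam_one mem_Collect_eq)
next
  fix c assume "c \<in> stab I"
  hence c: "c \<in> carrier P" and h: "inv\<^bsub>P\<^esub> g \<otimes>\<^bsub>P\<^esub> lam c g \<in> I" unfolding stab_def by auto
  have "lam (inv\<^bsub>C\<^esub> c) (inv\<^bsub>P\<^esub> (inv\<^bsub>P\<^esub> g \<otimes>\<^bsub>P\<^esub> lam c g)) = inv\<^bsub>P\<^esub> g \<otimes>\<^bsub>P\<^esub> lam (inv\<^bsub>C\<^esub> c) g"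
    using c gA by (simp add: P.inv_mult lam_add lam_neg P.m_comm)
  moreover have "lam (inv\<^bsub>C\<^esub> c) (inv\<^bsub>P\<^esub> (inv\<^bsub>P\<^esub> g \<otimes>\<^bsub>P\<^esub> lam c g)) \<in> I"
    using idl_lam[OF I _ idl_neg[OF I h]] c by simp
  ultimately show "inv\<^bsub>C\<^esub> c \<in> stab I" unfolding stab_def using c by simp
next
  fix c d assume "c \<in> stab I" "d \<in> stab I"
  hence c: "c \<in> carrier P" and hc: "inv\<^bsub>P\<^esub> g \<otimes>\<^bsub>P\<^esub> lam c g \<in> I"
    and d: "d \<in> carrier P" and hd: "inv\<^bsub>P\<^esub> g \<otimes>\<^bsub>P\<^esub> lam d g \<in> I" unfolding stab_def by auto
  have "lam c (inv\<^bsub>P\<^esub> g \<otimes>\<^bsub>P\<^esub> lam d g) \<otimes>\<^bsub>P\<^esub> (inv\<^bsub>P\<^esub> g \<otimes>\<^bsub>P\<^esub> lam c g)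
      = (inv\<^bsub>P\<^esub> (lam c g) \<otimes>\<^bsub>P\<^esub> lam c g) \<otimes>\<^bsub>P\<^esub> (inv\<^bsub>P\<^esub> g \<otimes>\<^bsub>P\<^esub> lam c (lam d g))"
    using c d gA by (simp add: lam_add lam_neg P.m_ac)
  also have "\<dots> = inv\<^bsub>P\<^esub> g \<otimes>\<^bsub>P\<^esub> lam (c \<otimes>\<^bsub>C\<^esub> d) g" using c d gA by (simp add: lam_comp)
  finally have "inv\<^bsub>P\<^esub> g \<otimes>\<^bsub>P\<^esub> lam (c \<otimes>\<^bsub>C\<^esub> d) g \<in> I"
    using idl_add[OF I idl_lam[OF I c hd] hc] by simp
  thus "c \<otimes>\<^bsub>C\<^esub> d \<in> stab I" unfolding stab_def using c d by simp
qed

lemma K: assumes I: "idl I" and c: "c \<in> carrier P"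
  shows "c \<in> succ I \<longleftrightarrow> inv\<^bsub>P\<^esub> g \<otimes>\<^bsub>P\<^esub> lam c g \<in> I"
proof
  assume "c \<in> succ I" thus "inv\<^bsub>P\<^esub> g \<otimes>\<^bsub>P\<^esub> lam c g \<in> I" unfolding succ_def using gA by blast
next
  assume hc: "inv\<^bsub>P\<^esub> g \<otimes>\<^bsub>P\<^esub> lam c g \<in> I"
  hence cs: "c \<in> stab I" unfolding stab_def using c by simp
  define U where "U = {u \<in> carrier P. inv\<^bsub>P\<^esub> u \<otimes>\<^bsub>P\<^esub> lam c u \<in> I}"
  have "subgroup U P"
  proof (rule P.subgroupI)
    show "U \<subseteq> carrier P" unfolding U_def by auto
    show "U \<noteq> {}" unfolding U_def using c idl_zero[OF I] P.one_closed
      by (metis (no_types, lifting) P.inv_one P.l_one lam_zero empty_iff mem_Collect_eq)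
  next
    fix u assume "u \<in> U"
    hence u: "u \<in> carrier P" and h: "inv\<^bsub>P\<^esub> u \<otimes>\<^bsub>P\<^esub> lam c u \<in> I" unfolding U_def by auto
    have "inv\<^bsub>P\<^esub> (inv\<^bsub>P\<^esub> u) \<otimes>\<^bsub>P\<^esub> lam c (inv\<^bsub>P\<^esub> u) = inv\<^bsub>P\<^esub> (inv\<^bsub>P\<^esub> u \<otimes>\<^bsub>P\<^esub> lam c u)"
      using u c by (simp add: lam_neg P.inv_mult P.m_comm)
    thus "inv\<^bsub>P\<^esub> u \<in> U" unfolding U_def using idl_neg[OF I h] u by simp
  next
    fix u v assume "u \<in> U" "v \<in> U"
    hence u: "u \<in> carrier P" and hu: "inv\<^bsub>P\<^esub> u \<otimes>\<^bsub>P\<^esub> lam c u \<in> I"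
      and v: "v \<in> carrier P" and hv: "inv\<^bsub>P\<^esub> v \<otimes>\<^bsub>P\<^esub> lam c v \<in> I" unfolding U_def by auto
    have "inv\<^bsub>P\<^esub> (u \<otimes>\<^bsub>P\<^esub> v) \<otimes>\<^bsub>P\<^esub> lam c (u \<otimes>\<^bsub>P\<^esub> v)
       = (inv\<^bsub>P\<^esub> u \<otimes>\<^bsub>P\<^esub> lam c u) \<otimes>\<^bsub>P\<^esub> (inv\<^bsub>P\<^esub> v \<otimes>\<^bsub>P\<^esub> lam c v)"
      using u v c by (simp add: lam_add P.inv_mult P.m_ac)
    thus "u \<otimes>\<^bsub>P\<^esub> v \<in> U" unfolding U_def using idl_add[OF I hu hv] u v by simp
  qed
  moreover have "lam a g \<in> U" if a: "a \<in> carrier P" for a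
  proof -
    define c' where "c' = inv\<^bsub>C\<^esub> a \<otimes>\<^bsub>C\<^esub> c \<otimes>\<^bsub>C\<^esub> a"
    have c's: "c' \<in> stab I" unfolding c'_def using conjC[OF stab_subgroup[OF I] a cs] .
    hence c'A: "c' \<in> carrier P" and h': "inv\<^bsub>P\<^esub> g \<otimes>\<^bsub>P\<^esub> lam c' g \<in> I" unfolding stab_def by auto
    have "a \<otimes>\<^bsub>C\<^esub> c' = c \<otimes>\<^bsub>C\<^esub> a" unfolding c'_def using a c carr
      by (metis C.inv_closed C.m_assoc C.m_closed C.r_inv C.l_one)
    hence "lam c (lam a g) = lam a (lam c' g)" using lam_comp a c c'A gA by metis
    hence "inv\<^bsub>P\<^esub> (lam a g) \<otimes>\<^bsub>P\<^esub> lam c (lam a g) = lam a (inv\<^bsub>P\<^esub> g \<otimes>\<^bsub>P\<^esub> lam c' g)"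
      using a c'A gA by (simp add: lam_add lam_neg)
    thus ?thesis unfolding U_def using idl_lam[OF I a h'] a gA by simp
  qed
  ultimately have "carrier P \<subseteq> U" using orbit_sub by blast
  thus "c \<in> succ I" unfolding succ_def U_def using c by blast
qed

end

context LBg begin

lemma conj_iff: assumes I: "idl I" and p: "p \<in> carrier P" and q: "q \<in> carrier P" and z: "z \<in> carrier P"
  shows "inv\<^bsub>C\<^esub> (p \<otimes>\<^bsub>C\<^esub> z) \<otimes>\<^bsub>C\<^esub> (q \<otimes>\<^bsub>C\<^esub> z) \<in> I \<longleftrightarrow> inv\<^bsub>C\<^esub> p \<otimes>\<^bsub>C\<^esub> q \<in> I"
proof -
  have sg: "subgroup I C" using I unfolding idl_def by blast
  have e: "inv\<^bsub>C\<^esub> (p \<otimes>\<^bsub>C\<^esub> z) \<otimes>\<^bsub>C\<^esub> (q \<otimes>\<^bsub>C\<^esub> z) = inv\<^bsub>C\<^esub> z \<otimes>\<^bsub>C\<^esub> (inv\<^bsub>C\<^esub> p \<otimes>\<^bsub>C\<^esub> q) \<otimes>\<^bsub>C\<^esub> z"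
    using p q z carr by (simp add: C.inv_mult_group C.m_assoc)
  have e2: "z \<otimes>\<^bsub>C\<^esub> (inv\<^bsub>C\<^esub> z \<otimes>\<^bsub>C\<^esub> (inv\<^bsub>C\<^esub> p \<otimes>\<^bsub>C\<^esub> q) \<otimes>\<^bsub>C\<^esub> z) \<otimes>\<^bsub>C\<^esub> inv\<^bsub>C\<^esub> z = inv\<^bsub>C\<^esub> p \<otimes>\<^bsub>C\<^esub> q"
    using p q z carr by (simp add: C.m_assoc)
  show ?thesis unfolding e
  proof
    assume "inv\<^bsub>C\<^esub> z \<otimes>\<^bsub>C\<^esub> (inv\<^bsub>C\<^esub> p \<otimes>\<^bsub>C\<^esub> q) \<otimes>\<^bsub>C\<^esub> z \<in> I"
    from conjC2[OF sg z this] show "inv\<^bsub>C\<^esub> p \<otimes>\<^bsub>C\<^esub> q \<in> I" unfolding e2 .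
  next
    assume "inv\<^bsub>C\<^esub> p \<otimes>\<^bsub>C\<^esub> q \<in> I"
    from conjC[OF sg z this] show "inv\<^bsub>C\<^esub> z \<otimes>\<^bsub>C\<^esub> (inv\<^bsub>C\<^esub> p \<otimes>\<^bsub>C\<^esub> q) \<otimes>\<^bsub>C\<^esub> z \<in> I" .
  qed
qed

lemma swap_iff: assumes I: "idl I" and L: "L \<in> carrier P" and M: "M \<in> carrier P"
  shows "L \<otimes>\<^bsub>C\<^esub> inv\<^bsub>C\<^esub> M \<in> I \<longleftrightarrow> inv\<^bsub>C\<^esub> M \<otimes>\<^bsub>C\<^esub> L \<in> I"
proof -
  have sg: "subgroup I C" using I unfolding idl_def by blast
  have e1: "inv\<^bsub>C\<^esub> M \<otimes>\<^bsub>C\<^esub> (L \<otimes>\<^bsub>C\<^esub> inv\<^bsub>C\<^esub> M) \<otimes>\<^bsub>C\<^esub> M = inv\<^bsub>C\<^esub> M \<otimes>\<^bsub>C\<^esub> L"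
    using L M carr by (simp add: C.m_assoc)
  have e2: "M \<otimes>\<^bsub>C\<^esub> (inv\<^bsub>C\<^esub> M \<otimes>\<^bsub>C\<^esub> L) \<otimes>\<^bsub>C\<^esub> inv\<^bsub>C\<^esub> M = L \<otimes>\<^bsub>C\<^esub> inv\<^bsub>C\<^esub> M"
    using L M carr by (simp add: C.m_assoc[symmetric])
  show ?thesis
  proof
    assume "L \<otimes>\<^bsub>C\<^esub> inv\<^bsub>C\<^esub> M \<in> I"
    from conjC[OF sg M this] show "inv\<^bsub>C\<^esub> M \<otimes>\<^bsub>C\<^esub> L \<in> I" unfolding e1 .
  next
    assume "inv\<^bsub>C\<^esub> M \<otimes>\<^bsub>C\<^esub> L \<in> I"
    from conjC2[OF sg M this] show "L \<otimes>\<^bsub>C\<^esub> inv\<^bsub>C\<^esub> M \<in> I" unfolding e2 .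
  qed
qed

lemma key_iff: assumes I: "idl I" and x: "x \<in> carrier P" and y: "y \<in> carrier P"
  shows "lam x g \<otimes>\<^bsub>C\<^esub> inv\<^bsub>C\<^esub> (lam y g) \<in> I \<longleftrightarrow> inv\<^bsub>C\<^esub> x \<otimes>\<^bsub>C\<^esub> y \<in> succ I"
proof -
  have L: "lam x g \<in> carrier P" and M: "lam y g \<in> carrier P" using x y gA by auto
  have "lam x g \<otimes>\<^bsub>C\<^esub> inv\<^bsub>C\<^esub> (lam y g) \<in> I \<longleftrightarrow> inv\<^bsub>C\<^esub> (lam y g) \<otimes>\<^bsub>C\<^esub> lam x g \<in> I"
    using swap_iff[OF I L M] .
  also have "\<dots> \<longleftrightarrow> inv\<^bsub>P\<^esub> (lam y g) \<otimes>\<^bsub>P\<^esub> lam x g \<in> I" using rel_circ[OF I M L] by simp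
  also have "\<dots> \<longleftrightarrow> lam (inv\<^bsub>C\<^esub> y) (inv\<^bsub>P\<^esub> (lam y g) \<otimes>\<^bsub>P\<^esub> lam x g) \<in> I"
    using idl_lam_iff[OF I, of "inv\<^bsub>C\<^esub> y"] y L M by simp
  also have "lam (inv\<^bsub>C\<^esub> y) (inv\<^bsub>P\<^esub> (lam y g) \<otimes>\<^bsub>P\<^esub> lam x g) = inv\<^bsub>P\<^esub> g \<otimes>\<^bsub>P\<^esub> lam (inv\<^bsub>C\<^esub> y \<otimes>\<^bsub>C\<^esub> x) g"
    using x y gA L M by (simp add: lam_add lam_neg lam_comp)
  also have "inv\<^bsub>P\<^esub> g \<otimes>\<^bsub>P\<^esub> lam (inv\<^bsub>C\<^esub> y \<otimes>\<^bsub>C\<^esub> x) g \<in> I \<longleftrightarrow> inv\<^bsub>C\<^esub> y \<otimes>\<^bsub>C\<^esub> x \<in> succ I"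
    using K[OF I] x y by simp
  also have "\<dots> \<longleftrightarrow> inv\<^bsub>C\<^esub> x \<otimes>\<^bsub>C\<^esub> y \<in> succ I"
  proof -
    have "inv\<^bsub>C\<^esub> (inv\<^bsub>C\<^esub> y \<otimes>\<^bsub>C\<^esub> x) = inv\<^bsub>C\<^esub> x \<otimes>\<^bsub>C\<^esub> y"
      "inv\<^bsub>C\<^esub> (inv\<^bsub>C\<^esub> x \<otimes>\<^bsub>C\<^esub> y) = inv\<^bsub>C\<^esub> y \<otimes>\<^bsub>C\<^esub> x"
      using x y carr by (simp_all add: C.inv_mult_group)
    thus ?thesis using succ_invC[OF I, of "inv\<^bsub>C\<^esub> y \<otimes>\<^bsub>C\<^esub> x"] succ_invC[OF I, of "inv\<^bsub>C\<^esub> x \<otimes>\<^bsub>C\<^esub> y"] by auto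
  qed
  finally show ?thesis .
qed

lemma uni_step: assumes I: "idl I" and h: "ret_rel (carrier P) (unicon_op P C g) n = rel I"
  shows "ret_rel (carrier P) (unicon_op P C g) (Suc n) = rel (succ I)"
proof -
  have "(x,y) \<in> ret_rel (carrier P) (unicon_op P C g) (Suc n) \<longleftrightarrow> (x,y) \<in> rel (succ I)" for x y
  proof (cases "x \<in> carrier P \<and> y \<in> carrier P")
    case True
    hence x: "x \<in> carrier P" and y: "y \<in> carrier P" by auto
    have L: "lam x g \<in> carrier P" and M: "lam y g \<in> carrier P" using x y gA by auto
    have "(x,y) \<in> ret_rel (carrier P) (unicon_op P C g) (Suc n) \<longleftrightarrow>
       (\<forall>z\<in>carrier P. inv\<^bsub>C\<^esub> (inv\<^bsub>C\<^esub> (lam x g) \<otimes>\<^bsub>C\<^esub> z) \<otimes>\<^bsub>C\<^esub> (inv\<^bsub>C\<^esub> (lam y g) \<otimes>\<^bsub>C\<^esub> z) \<in> I)"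
      using x y L M h idl_relC[OF I] unfolding unicon_op_def by simp
    also have "\<dots> \<longleftrightarrow> inv\<^bsub>C\<^esub> (inv\<^bsub>C\<^esub> (lam x g)) \<otimes>\<^bsub>C\<^esub> inv\<^bsub>C\<^esub> (lam y g) \<in> I"
    proof
      assume "\<forall>z\<in>carrier P. inv\<^bsub>C\<^esub> (inv\<^bsub>C\<^esub> (lam x g) \<otimes>\<^bsub>C\<^esub> z) \<otimes>\<^bsub>C\<^esub> (inv\<^bsub>C\<^esub> (lam y g) \<otimes>\<^bsub>C\<^esub> z) \<in> I"
      hence "inv\<^bsub>C\<^esub> (inv\<^bsub>C\<^esub> (lam x g) \<otimes>\<^bsub>C\<^esub> \<one>\<^bsub>P\<^esub>) \<otimes>\<^bsub>C\<^esub> (inv\<^bsub>C\<^esub> (lam y g) \<otimes>\<^bsub>C\<^esub> \<one>\<^bsub>P\<^esub>) \<in> I"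
        using P.one_closed by blast
      thus "inv\<^bsub>C\<^esub> (inv\<^bsub>C\<^esub> (lam x g)) \<otimes>\<^bsub>C\<^esub> inv\<^bsub>C\<^esub> (lam y g) \<in> I"
        using conj_iff[OF I _ _ P.one_closed, of "inv\<^bsub>C\<^esub> (lam x g)" "inv\<^bsub>C\<^esub> (lam y g)"] L M by simp
    next
      assume "inv\<^bsub>C\<^esub> (inv\<^bsub>C\<^esub> (lam x g)) \<otimes>\<^bsub>C\<^esub> inv\<^bsub>C\<^esub> (lam y g) \<in> I"
      thus "\<forall>z\<in>carrier P. inv\<^bsub>C\<^esub> (inv\<^bsub>C\<^esub> (lam x g) \<otimes>\<^bsub>C\<^esub> z) \<otimes>\<^bsub>C\<^esub> (inv\<^bsub>C\<^esub> (lam y g) \<otimes>\<^bsub>C\<^esub> z) \<in> I"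
        using conj_iff[OF I, of "inv\<^bsub>C\<^esub> (lam x g)" "inv\<^bsub>C\<^esub> (lam y g)"] L M by simp
    qed
    also have "\<dots> \<longleftrightarrow> inv\<^bsub>C\<^esub> x \<otimes>\<^bsub>C\<^esub> y \<in> succ I"
      using key_iff[OF I x y] L carr by simp
    also have "\<dots> \<longleftrightarrow> (x,y) \<in> rel (succ I)" using idl_relC[OF idl_succ[OF I]] x y by simp
    finally show ?thesis .
  next
    case False thus ?thesis unfolding rel_def by auto
  qed
  thus ?thesis by (meson subrelI subset_antisym)
qed

end

context LB begin

definition soc where "soc n = (succ ^^ n) {\<one>\<^bsub>P\<^esub>}"

lemma idl_triv: "idl {\<one>\<^bsub>P\<^esub>}"
  unfolding idl_def using P.triv_subgroup C.triv_subgroup by simp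

lemma idl_soc: "idl (soc n)"
  by (induction n) (simp_all add: soc_def idl_triv idl_succ)

lemma soc_Suc: "soc (Suc n) = succ (soc n)" unfolding soc_def by simp

lemma base_rel: "ret_rel (carrier P) op 0 = rel {\<one>\<^bsub>P\<^esub>}"
proof -
  have "inv\<^bsub>P\<^esub> a \<otimes>\<^bsub>P\<^esub> b = \<one>\<^bsub>P\<^esub> \<longleftrightarrow> a = b" if "a \<in> carrier P" "b \<in> carrier P" for a b
    using that by (metis P.inv_closed P.l_inv P.r_one P_canc1)
  thus ?thesis unfolding rel_def Id_on_def by auto
qed

lemma rel_equiv: assumes I: "idl I" shows "equiv (carrier P) (rel I)"
proof (rule equivI)
  show "rel I \<subseteq> carrier P \<times> carrier P" unfolding rel_def by auto
  show "refl_on (carrier P) (rel I)" unfolding refl_on_def rel_def using idl_zero[OF I] by auto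
  show "sym (rel I)" unfolding sym_def rel_def
  proof (intro allI impI)
    fix x y assume "(x, y) \<in> {(a, b). a \<in> carrier P \<and> b \<in> carrier P \<and> inv\<^bsub>P\<^esub> a \<otimes>\<^bsub>P\<^esub> b \<in> I}"
    hence x: "x \<in> carrier P" and y: "y \<in> carrier P" and h: "inv\<^bsub>P\<^esub> x \<otimes>\<^bsub>P\<^esub> y \<in> I" by auto
    have "inv\<^bsub>P\<^esub> y \<otimes>\<^bsub>P\<^esub> x = inv\<^bsub>P\<^esub> (inv\<^bsub>P\<^esub> x \<otimes>\<^bsub>P\<^esub> y)" using x y by (simp add: P.inv_mult P.m_comm)
    thus "(y, x) \<in> {(a, b). a \<in> carrier P \<and> b \<in> carrier P \<and> inv\<^bsub>P\<^esub> a \<otimes>\<^bsub>P\<^esub> b \<in> I}"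
      using idl_neg[OF I h] x y by simp
  qed
  show "trans (rel I)" unfolding trans_def rel_def
  proof (intro allI impI)
    fix x y z assume "(x, y) \<in> {(a, b). a \<in> carrier P \<and> b \<in> carrier P \<and> inv\<^bsub>P\<^esub> a \<otimes>\<^bsub>P\<^esub> b \<in> I}"
      "(y, z) \<in> {(a, b). a \<in> carrier P \<and> b \<in> carrier P \<and> inv\<^bsub>P\<^esub> a \<otimes>\<^bsub>P\<^esub> b \<in> I}"
    hence x: "x \<in> carrier P" and y: "y \<in> carrier P" and z: "z \<in> carrier P"
      and h1: "inv\<^bsub>P\<^esub> x \<otimes>\<^bsub>P\<^esub> y \<in> I" and h2: "inv\<^bsub>P\<^esub> y \<otimes>\<^bsub>P\<^esub> z \<in> I" by auto
    have "inv\<^bsub>P\<^esub> x \<otimes>\<^bsub>P\<^esub> z = (inv\<^bsub>P\<^esub> x \<otimes>\<^bsub>P\<^esub> y) \<otimes>\<^bsub>P\<^esub> (inv\<^bsub>P\<^esub> y \<otimes>\<^bsub>P\<^esub> z)"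
      using x y z by (simp add: P.m_assoc)
    thus "(x, z) \<in> {(a, b). a \<in> carrier P \<and> b \<in> carrier P \<and> inv\<^bsub>P\<^esub> a \<otimes>\<^bsub>P\<^esub> b \<in> I}"
      using idl_add[OF I h1 h2] x z by simp
  qed
qed

lemma tcb_orbit: assumes T: "transitive_cycle_base P C B" and g: "g \<in> B"
  shows "g \<in> carrier P \<and> carrier P \<subseteq> generate P ((\<lambda>a. lam a g) ` carrier P)"
proof -
  obtain x where x: "x \<in> carrier P" and B: "B = (\<lambda>a. lam a x) ` carrier P"
    and G: "generate P B = carrier P" using T unfolding transitive_cycle_base_def by blast
  obtain b where b: "b \<in> carrier P" and gb: "g = lam b x" using g B by blast
  have gA: "g \<in> carrier P" using gb b x by simp
  have "B \<subseteq> (\<lambda>a. lam a g) ` carrier P"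
  proof
    fix y assume "y \<in> B"
    then obtain a where a: "a \<in> carrier P" and y: "y = lam a x" using B by blast
    have "a \<otimes>\<^bsub>C\<^esub> inv\<^bsub>C\<^esub> b \<otimes>\<^bsub>C\<^esub> b = a" using a b carr by (metis C.inv_closed C.l_inv C.m_assoc C.r_one)
    hence "lam (a \<otimes>\<^bsub>C\<^esub> inv\<^bsub>C\<^esub> b) g = y" unfolding gb y
      using lam_comp[of "a \<otimes>\<^bsub>C\<^esub> inv\<^bsub>C\<^esub> b" b x] a b x by simp
    moreover have "a \<otimes>\<^bsub>C\<^esub> inv\<^bsub>C\<^esub> b \<in> carrier P" using a b by simp
    ultimately show "y \<in> (\<lambda>a. lam a g) ` carrier P" by blast
  qed
  hence "generate P B \<subseteq> generate P ((\<lambda>a. lam a g) ` carrier P)" by (rule P.mono_generate)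
  thus ?thesis using G gA by simp
qed

end

context LBg begin

lemma rets: "ret_rel (carrier P) (decomp_op P C) n = rel (soc n) \<and> ret_rel (carrier P) (unicon_op P C g) n = rel (soc n)"
proof (induction n)
  case 0 show ?case using base_rel by (simp add: soc_def)
next
  case (Suc n)
  show ?case unfolding soc_Suc
    using dec_step[OF idl_soc conjunct1[OF Suc.IH]] uni_step[OF idl_soc conjunct2[OF Suc.IH]] by blast
qed

lemma fixA: assumes fin: "finite (carrier P)" and I: "idl I" and eq: "succ I = I"
  shows "carrier P \<subseteq> I"
proof -
  define R where "R = rel I"
  have eqv: "equiv (carrier P) R" unfolding R_def using rel_equiv[OF I] .
  define phi where "phi a = lam a g" for a
  have phiA: "a \<in> carrier P \<Longrightarrow> phi a \<in> carrier P" for a unfolding phi_def using gA by simp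
  have stR: "(phi x, phi y) \<in> R \<longleftrightarrow> (x,y) \<in> R" if x: "x \<in> carrier P" and y: "y \<in> carrier P" for x y
  proof -
    have "(phi x, phi y) \<in> R \<longleftrightarrow> inv\<^bsub>P\<^esub> (lam x g) \<otimes>\<^bsub>P\<^esub> lam y g \<in> I"
      unfolding R_def rel_def phi_def using x y gA by simp
    also have "\<dots> \<longleftrightarrow> lam (inv\<^bsub>C\<^esub> x) (inv\<^bsub>P\<^esub> (lam x g) \<otimes>\<^bsub>P\<^esub> lam y g) \<in> I"
      using idl_lam_iff[OF I, of "inv\<^bsub>C\<^esub> x"] x y gA by simp
    also have "lam (inv\<^bsub>C\<^esub> x) (inv\<^bsub>P\<^esub> (lam x g) \<otimes>\<^bsub>P\<^esub> lam y g) = inv\<^bsub>P\<^esub> g \<otimes>\<^bsub>P\<^esub> lam (inv\<^bsub>C\<^esub> x \<otimes>\<^bsub>C\<^esub> y) g"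
      using x y gA by (simp add: lam_add lam_neg lam_comp)
    also have "inv\<^bsub>P\<^esub> g \<otimes>\<^bsub>P\<^esub> lam (inv\<^bsub>C\<^esub> x \<otimes>\<^bsub>C\<^esub> y) g \<in> I \<longleftrightarrow> inv\<^bsub>C\<^esub> x \<otimes>\<^bsub>C\<^esub> y \<in> I"
      using K[OF I, of "inv\<^bsub>C\<^esub> x \<otimes>\<^bsub>C\<^esub> y"] eq x y by simp
    also have "\<dots> \<longleftrightarrow> (x,y) \<in> R" unfolding R_def using idl_relC[OF I] x y by simp
    finally show ?thesis .
  qed
  define FF where "FF XX = R `` (phi ` XX)" for XX
  have FX: "FF (R``{x}) = R``{phi x}" if x: "x \<in> carrier P" for x
  proof
    show "FF (R``{x}) \<subseteq> R``{phi x}"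
    proof
      fix y assume "y \<in> FF (R``{x})"
      then obtain x' where xx: "(x,x') \<in> R" and xy: "(phi x', y) \<in> R" unfolding FF_def by blast
      have x': "x' \<in> carrier P" using xx eqv unfolding equiv_def refl_on_def by blast
      have "(phi x, phi x') \<in> R" using stR[OF x x'] xx by simp
      thus "y \<in> R``{phi x}" using xy eqv unfolding equiv_def trans_def by blast
    qed
    show "R``{phi x} \<subseteq> FF (R``{x})"
    proof
      fix y assume "y \<in> R``{phi x}"
      moreover have "(x,x) \<in> R" using x eqv unfolding equiv_def refl_on_def by blast
      ultimately show "y \<in> FF (R``{x})" unfolding FF_def by blast
    qed
  qed
  have inj: "inj_on FF (carrier P // R)"
  proof (rule inj_onI)
    fix XX YY assume XX: "XX \<in> carrier P // R" and YY: "YY \<in> carrier P // R" and e: "FF XX = FF YY"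
    obtain x where x: "x \<in> carrier P" and Xx: "XX = R``{x}" using XX by (rule quotientE) auto
    obtain y where y: "y \<in> carrier P" and Yy: "YY = R``{y}" using YY by (rule quotientE) auto
    have "R``{phi x} = R``{phi y}" using e FX x y Xx Yy by simp
    hence "(phi x, phi y) \<in> R" using eq_equiv_class_iff[OF eqv phiA[OF x] phiA[OF y]] by simp
    hence "(x, y) \<in> R" using stR x y by simp
    thus "XX = YY" using Xx Yy eq_equiv_class_iff[OF eqv x y] by simp
  qed
  have sub: "FF ` (carrier P // R) \<subseteq> carrier P // R"
  proof
    fix Z assume "Z \<in> FF ` (carrier P // R)"
    then obtain XX where XX: "XX \<in> carrier P // R" and Z: "Z = FF XX" by blast
    obtain x where x: "x \<in> carrier P" and Xx: "XX = R``{x}" using XX by (rule quotientE) auto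
    show "Z \<in> carrier P // R" using Z Xx FX[OF x] quotientI[OF phiA[OF x]] by simp
  qed
  have finQ: "finite (carrier P // R)"
    using finite_quotient[OF fin] eqv unfolding equiv_def by blast
  have surj: "FF ` (carrier P // R) = carrier P // R" using endo_inj_surj[OF finQ sub inj] .
  have "R``{\<one>\<^bsub>P\<^esub>} \<in> carrier P // R" using quotientI[OF P.one_closed] .
  hence "R``{\<one>\<^bsub>P\<^esub>} \<in> FF ` (carrier P // R)" using surj by simp
  then obtain XX where XX: "XX \<in> carrier P // R" and FXe: "FF XX = R``{\<one>\<^bsub>P\<^esub>}" by (rule imageE) simp
  obtain x where x: "x \<in> carrier P" and Xx: "XX = R``{x}" using XX by (rule quotientE) auto
  have "R``{phi x} = R``{\<one>\<^bsub>P\<^esub>}" using FXe FX[OF x] Xx by simp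
  hence "(phi x, \<one>\<^bsub>P\<^esub>) \<in> R" using eq_equiv_class_iff[OF eqv phiA[OF x] P.one_closed] by simp
  hence "inv\<^bsub>P\<^esub> (lam x g) \<in> I" unfolding R_def rel_def phi_def using x gA by simp
  hence "lam x g \<in> I" using idl_neg_iff[OF I] x gA by simp
  hence gI: "g \<in> I" using idl_lam_iff[OF I x gA] by simp
  have "lam a g \<in> I" if "a \<in> carrier P" for a using idl_lam[OF I that gI] .
  moreover have "subgroup I P" using I unfolding idl_def by blast
  ultimately show ?thesis using orbit_sub by blast
qed

lemma soc_mono: "soc n \<subseteq> soc (Suc n)" using I_succ[OF idl_soc] soc_Suc by simp

lemma exists_fix: assumes fin: "finite (carrier P)" shows "\<exists>n. succ (soc n) = soc n"
proof (rule ccontr)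
  assume "\<not> ?thesis"
  hence ne: "soc (Suc n) \<noteq> soc n" for n using soc_Suc by simp
  have fs: "finite (soc n)" for n using fin idl_sub[OF idl_soc] by (meson finite_subset subsetI)
  have "n \<le> card (soc n)" for n
  proof (induction n)
    case 0 show ?case by simp
  next
    case (Suc n)
    have "soc n \<subset> soc (Suc n)" using soc_mono ne by blast
    hence "card (soc n) < card (soc (Suc n))" using psubset_card_mono fs by blast
    thus ?case using Suc by simp
  qed
  moreover have "card (soc n) \<le> card (carrier P)" for n
    using card_mono[OF fin] idl_sub[OF idl_soc] by blast
  ultimately have "Suc (card (carrier P)) \<le> card (carrier P)"
    using le_trans by blast
  thus False by simp
qed

lemma soc_full: assumes fin: "finite (carrier P)" shows "\<exists>n. soc n = carrier P"
proof -
  obtain n where "succ (soc n) = soc n" using exists_fix[OF fin] by blast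
  hence "carrier P \<subseteq> soc n" using fixA[OF fin idl_soc] by blast
  thus ?thesis using idl_sub[OF idl_soc] by blast
qed

lemma card_full: "card (carrier P // rel (carrier P)) = 1"
proof -
  have "rel (carrier P) = carrier P \<times> carrier P" unfolding rel_def by auto
  hence "carrier P // rel (carrier P) = {carrier P}" unfolding quotient_def using P.one_closed by auto
  thus ?thesis by simp
qed

end

theorem mainTheorem6:
  fixes Gadd Gcirc :: "'a monoid" and B :: "'a set" and g :: 'a
  assumes "left_brace Gadd Gcirc"
    and "finite (carrier Gadd)"
    and "dedekind_group Gcirc"
    and "transitive_cycle_base Gadd Gcirc B"
    and "g \<in> B"
  shows "has_finite_mpl (carrier Gadd) (decomp_op Gadd Gcirc)
       \<and> has_finite_mpl (carrier Gadd) (unicon_op Gadd Gcirc g)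
       \<and> mpl (carrier Gadd) (decomp_op Gadd Gcirc) = mpl (carrier Gadd) (unicon_op Gadd Gcirc g)
       \<and> (\<forall>n. Ret_iter (carrier Gadd) (decomp_op Gadd Gcirc) n
              = Ret_iter (carrier Gadd) (unicon_op Gadd Gcirc g) n)"
proof -
  have L: "LB Gadd Gcirc" unfolding LB_def using assms(1,3) by blast
  have o: "g \<in> carrier Gadd \<and> carrier Gadd \<subseteq> generate Gadd ((\<lambda>a. brace_lambda Gadd Gcirc a g) ` carrier Gadd)"
    using LB.tcb_orbit[OF L assms(4,5)] .
  have Lg: "LBg Gadd Gcirc g" unfolding LBg_def LBg_axioms_def using L o by blast
  obtain N where N: "LB.soc Gadd Gcirc N = carrier Gadd" using LBg.soc_full[OF Lg assms(2)] by blast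
  have RI: "Ret_iter (carrier Gadd) (decomp_op Gadd Gcirc) n = Ret_iter (carrier Gadd) (unicon_op Gadd Gcirc g) n" for n
    unfolding Ret_iter_def using LBg.rets[OF Lg, of n] by simp
  have fe: "Ret_iter (carrier Gadd) (decomp_op Gadd Gcirc) = Ret_iter (carrier Gadd) (unicon_op Gadd Gcirc g)"
    using RI by (rule ext)
  have f1: "card (Ret_iter (carrier Gadd) (decomp_op Gadd Gcirc) N) = 1"
    unfolding Ret_iter_def using LBg.rets[OF Lg, of N] N LBg.card_full[OF Lg] by simp
  have f2: "card (Ret_iter (carrier Gadd) (unicon_op Gadd Gcirc g) N) = 1" using f1 RI by simp
  show ?thesis unfolding has_finite_mpl_def mpl_def using f1 f2 RI fe by metis
qed

end
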